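(* Let $\nu>0$ and \[W_2(x)=(1-x^2)^{\nu-1/2}\begin{pmatrix}2(\nu+1)x^2+2\nu&(2\nu+1)\sqrt2\,x\\(2\nu+1)\sqrt2\,x&\nu x^2+\nu+1\end{pmatrix},\qquad x\in(-1,1).\] Let $B_n,C_n$ be the $2\times2$ recurrence coefficients of the monic matrix orthogonal polynomials $P_n$ for $W_2$, i.e. $xP_n(x)=P_{n+1}(x)+B_nP_n(x)+C_nP_{n-1}(x)$ with $P_{-1}=0$, $P_0=I_2$. Then as $n\to\infty$, \[B_n=\frac1{n^2}\begin{pmatrix}0&\sqrt2(1+\nu)\\ \frac{\nu}{\sqrt2}&0\end{pmatrix}+O(n^{-3}),\qquad C_n=\frac14I_2+O(n^{-2}).\]
   Context: The monic matrix orthogonal polynomial $P_n$ of degree $n$ for $W_2$ is the unique $2\times2$ matrix polynomial $P_n(x)=x^nI_2+\dots$ with $\int_{-1}^1P_n(x)W_2(x)P_m(x)^\ast dx=0$ for $m\ne n$. *)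

theory Defs
  imports "HOL-Analysis.Analysis"
begin

text \<open>2x2 real matrices are rendered as real^2^2; entry (i,j) is A $ i $ j (row i).\<close>

definition mat2 :: "real \<Rightarrow> real \<Rightarrow> real \<Rightarrow> real \<Rightarrow> real^2^2" where
  "mat2 a b c d = vector [vector [a, b], vector [c, d]]"

text \<open>The weight W_2 on (-1,1) (its value at the endpoints is irrelevant).\<close>
definition W2 :: "real \<Rightarrow> real \<Rightarrow> real^2^2" where
  "W2 \<nu> x = ((1 - x\<^sup>2) powr (\<nu> - 1/2)) *\<^sub>R
     mat2 (2*(\<nu>+1)*x\<^sup>2 + 2*\<nu>) ((2*\<nu>+1) * sqrt 2 * x)
          ((2*\<nu>+1) * sqrt 2 * x) (\<nu> * x\<^sup>2 + \<nu> + 1)"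

definition monic_matpoly :: "nat \<Rightarrow> (real \<Rightarrow> real^2^2) \<Rightarrow> bool" where
  "monic_matpoly n p \<longleftrightarrow>
     (\<exists>A :: nat \<Rightarrow> real^2^2. \<forall>x. p x = x ^ n *\<^sub>R mat 1 + (\<Sum>k<n. x ^ k *\<^sub>R A k))"

text \<open>P is the sequence of monic matrix orthogonal polynomials for the weight W
  (the adjoint of a real matrix is its transpose).\<close>
definition monic_MOPS :: "(real \<Rightarrow> real^2^2) \<Rightarrow> (nat \<Rightarrow> real \<Rightarrow> real^2^2) \<Rightarrow> bool" where
  "monic_MOPS W P \<longleftrightarrow>
     (\<forall>n. monic_matpoly n (P n)) \<and>
     (\<forall>n m. n \<noteq> m \<longrightarrow>
        ((\<lambda>x. P n x ** W x ** transpose (P m x)) has_integral 0) {-1..1})"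

end

theory Submission
  imports Defs
begin

definition ww :: "real \<Rightarrow> real \<Rightarrow> real" where
  "ww \<nu> x = (1 - x\<^sup>2) powr (\<nu> - 1/2)"

lemma ww_nonneg: "ww \<nu> x \<ge> 0" by (simp add: ww_def)

lemma ww_integrable:
  assumes "\<nu> > 0"
  shows "ww \<nu> integrable_on {-1..1}"
proof -
  have b: "(\<lambda>t. t powr ((\<nu>+1/2) - 1) * (1 - t) powr ((\<nu>+1/2) - 1)) integrable_on {0..1}"
    by (rule integrable_Beta') (use assms in auto)
  have "(\<lambda>t. 4 powr (\<nu>-1/2) * (t powr ((\<nu>+1/2) - 1) * (1 - t) powr ((\<nu>+1/2) - 1))) integrable_on {0..1}"
    using integrable_on_cmult_left[OF b] by simp
  moreover have "ww \<nu> (2*t - 1) = 4 powr (\<nu>-1/2) * (t powr ((\<nu>+1/2) - 1) * (1 - t) powr ((\<nu>+1/2) - 1))"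
    if "t \<in> {0..1}" for t
  proof -
    have "1 - (2*t-1)\<^sup>2 = 4 * (t * (1-t))" by (simp add: power2_eq_square algebra_simps)
    then show ?thesis using that
      by (simp add: ww_def powr_mult)
  qed
  ultimately have "(\<lambda>t. ww \<nu> (2*t - 1)) integrable_on {0..1}"
    by (metis (no_types, lifting) integrable_eq)
  then have "(\<lambda>x. (\<lambda>t. ww \<nu> (2*t - 1)) ((1/2) *\<^sub>R x + 1/2)) integrable_on
      ((\<lambda>x. (1 / (1/2)) *\<^sub>R x + -((1/(1/2)) *\<^sub>R (1/2))) ` cbox 0 1)"
    by (intro integrable_affinity) auto
  moreover have "((\<lambda>x. (1 / (1/2)) *\<^sub>R x + -((1/(1/2)) *\<^sub>R (1/2::real))) ` cbox 0 1) = {-1..1}"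
    by (auto simp: image_iff intro!: bexI[where x="(_+1)/2"]; simp add: field_simps)
  ultimately show ?thesis by simp
qed

lemma bm_leb: "f \<in> borel_measurable borel \<Longrightarrow> f \<in> borel_measurable (lebesgue_on S)"
  by (rule measurable_restrict_space1, rule measurable_completion) simp

lemma xk_ww_integrable:
  assumes "\<nu> > 0"
  shows "(\<lambda>x. x^k * ww \<nu> x) integrable_on {-1..1}"
proof (rule measurable_bounded_by_integrable_imp_integrable_real[OF _ ww_integrable[OF assms]])
  show "(\<lambda>x. x^k * ww \<nu> x) \<in> borel_measurable (lebesgue_on {-1..1})"
    by (rule bm_leb) (unfold ww_def, measurable)
  show "\<bar>x^k * ww \<nu> x\<bar> \<le> ww \<nu> x" if "x \<in> {-1..1}" for x
  proof -
    have "\<bar>x\<bar>^k \<le> 1" using that by (intro power_le_one) auto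
    then have "\<bar>x\<bar>^k * ww \<nu> x \<le> 1 * ww \<nu> x" by (intro mult_right_mono) (auto simp: ww_nonneg)
    then show ?thesis by (simp add: abs_mult power_abs ww_nonneg)
  qed
qed auto

definition mm :: "real \<Rightarrow> nat \<Rightarrow> real" where
  "mm \<nu> k = integral {-1..1} (\<lambda>x. x^k * ww \<nu> x)"

lemma mm_has_integral:
  assumes "\<nu> > 0"
  shows "((\<lambda>x. x^k * ww \<nu> x) has_integral mm \<nu> k) {-1..1}"
  using xk_ww_integrable[OF assms] by (simp add: mm_def integrable_integral)

lemma powr_split:
  assumes "-1 < x" "x < 1"
  shows "(1 - x\<^sup>2) powr (\<nu> + 1/2) = (1 - x\<^sup>2) * ww \<nu> x"
proof -
  have p: "1 - x\<^sup>2 > 0" using assms by (simp add: abs_square_less_1 abs_less_iff)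
  have "\<nu> + 1/2 = 1 + (\<nu> - 1/2)" by simp
  then have "(1 - x\<^sup>2) powr (\<nu> + 1/2) = (1 - x\<^sup>2) powr (1 + (\<nu> - 1/2))" by metis
  also have "\<dots> = (1 - x\<^sup>2) powr 1 * (1 - x\<^sup>2) powr (\<nu> - 1/2)" by (rule powr_add)
  also have "\<dots> = (1 - x\<^sup>2) * ww \<nu> x" using p by (simp add: ww_def)
  finally show ?thesis .
qed

lemma mm_rec:
  assumes "\<nu> > 0"
  shows "real (k+1) * mm \<nu> k = (real k + 2*\<nu> + 2) * mm \<nu> (k+2)"
proof -
  define g where "g x = x^(k+1) * (1 - x\<^sup>2) powr (\<nu> + 1/2)" for x
  define g' where "g' x = real (k+1) * (x^k * ww \<nu> x) - (real k + 2*\<nu> + 2) * (x^(k+2) * ww \<nu> x)" for x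
  have "(g' has_integral (g 1 - g (-1))) {-1..1}"
  proof (rule fundamental_theorem_of_calculus_interior)
    show "continuous_on {-1..1} g" unfolding g_def
      using assms by (intro continuous_intros continuous_on_powr') (auto simp: abs_square_le_1 abs_le_iff)
    show "(g has_vector_derivative g' x) (at x)" if "x \<in> {-1<..<1}" for x
    proof -
      have p: "1 - x\<^sup>2 > 0" using that by (simp add: abs_square_less_1 abs_less_iff)
      have "(g has_real_derivative
          real (k+1) * x^k * (1 - x\<^sup>2) powr (\<nu> + 1/2) +
          x^(k+1) * ((\<nu> + 1/2) * (1 - x\<^sup>2) powr (\<nu> + 1/2 - 1) * (- (2 * x)))) (at x)"
        unfolding g_def using p
        by (auto intro!: derivative_eq_intros simp: power2_eq_square) (cases k, auto simp: algebra_simps)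
      moreover have "real (k+1) * x^k * (1 - x\<^sup>2) powr (\<nu> + 1/2) +
          x^(k+1) * ((\<nu> + 1/2) * (1 - x\<^sup>2) powr (\<nu> + 1/2 - 1) * (- (2 * x))) = g' x"
        unfolding powr_split[of x \<nu>, OF conjunct1[OF that[simplified]] conjunct2[OF that[simplified]]]
        by (simp add: g'_def ww_def algebra_simps power2_eq_square)
      ultimately show ?thesis by (simp add: has_real_derivative_iff_has_vector_derivative)
    qed
  qed simp
  moreover have "g 1 = 0" "g (-1) = 0" using assms by (simp_all add: g_def)
  ultimately have z: "(g' has_integral 0) {-1..1}" by simp
  have "(g' has_integral (real (k+1) * mm \<nu> k - (real k + 2*\<nu> + 2) * mm \<nu> (k+2))) {-1..1}"
    unfolding g'_def
    by (intro has_integral_diff has_integral_mult_right mm_has_integral assms)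
  from has_integral_unique[OF z this] show ?thesis by simp
qed

lemma mm_1:
  assumes "\<nu> > 0"
  shows "mm \<nu> 1 = 0"
proof -
  define g where "g x = (1 - x\<^sup>2) powr (\<nu> + 1/2)" for x
  define g' where "g' x = - (2*\<nu> + 1) * (x^1 * ww \<nu> x)" for x
  have "(g' has_integral (g 1 - g (-1))) {-1..1}"
  proof (rule fundamental_theorem_of_calculus_interior)
    show "continuous_on {-1..1} g" unfolding g_def
      using assms by (intro continuous_intros continuous_on_powr') (auto simp: abs_square_le_1 abs_le_iff)
    show "(g has_vector_derivative g' x) (at x)" if "x \<in> {-1<..<1}" for x
    proof -
      have p: "1 - x\<^sup>2 > 0" using that by (simp add: abs_square_less_1 abs_less_iff)
      have "(g has_real_derivative
          ((\<nu> + 1/2) * (1 - x\<^sup>2) powr (\<nu> + 1/2 - 1) * (- (2 * x)))) (at x)"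
        unfolding g_def using p
        by (auto intro!: derivative_eq_intros simp: power2_eq_square)
      moreover have "((\<nu> + 1/2) * (1 - x\<^sup>2) powr (\<nu> + 1/2 - 1) * (- (2 * x))) = g' x"
        by (simp add: g'_def ww_def algebra_simps)
      ultimately show ?thesis by (simp add: has_real_derivative_iff_has_vector_derivative)
    qed
  qed simp
  moreover have "g 1 = 0" "g (-1) = 0" using assms by (simp_all add: g_def)
  ultimately have z: "(g' has_integral 0) {-1..1}" by simp
  have "(g' has_integral (- (2*\<nu> + 1) * mm \<nu> 1)) {-1..1}"
    unfolding g'_def
    by (intro has_integral_mult_right mm_has_integral assms)
  from has_integral_unique[OF z this] show ?thesis using assms by simp
qed


lemma mat2_nth [simp]:
  "mat2 a b c d $ 1 $ 1 = a" "mat2 a b c d $ 1 $ 2 = b"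
  "mat2 a b c d $ 2 $ 1 = c" "mat2 a b c d $ 2 $ 2 = d"
  by (simp_all add: mat2_def)

lemma mat_eq_iff2: "(A::real^2^2) = B \<longleftrightarrow> A$1$1 = B$1$1 \<and> A$1$2 = B$1$2 \<and> A$2$1 = B$2$1 \<and> A$2$2 = B$2$2"
  by (auto simp: vec_eq_iff forall_2)

lemma mmul_nth2 [simp]: "((A::real^2^2) ** B) $ i $ j = A$i$1 * B$1$j + A$i$2 * B$2$j"
  by (simp add: matrix_matrix_mult_def sum_2)

lemma mat1_nth2 [simp]: "(mat 1 :: real^2^2) $ 1 $ 1 = 1" "(mat 1 :: real^2^2) $ 2 $ 2 = 1"
   "(mat 1 :: real^2^2) $ 1 $ 2 = 0" "(mat 1 :: real^2^2) $ 2 $ 1 = 0"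
  by (simp_all add: mat_def)

lemma transpose_nth [simp]: "transpose A $ i $ j = A $ j $ i"
  by (simp add: transpose_def)

lemma mm_scaleR_left: "((c::real) *\<^sub>R A) ** (B::real^'n^'m) = c *\<^sub>R (A ** B)"
  by (simp add: matrix_matrix_mult_def vec_eq_iff sum_distrib_left mult.assoc)

lemma mm_scaleR_right: "(A::real^'n^'m) ** ((c::real) *\<^sub>R B) = c *\<^sub>R (A ** B)"
  by (simp add: matrix_matrix_mult_def vec_eq_iff sum_distrib_left algebra_simps)

lemma matrix_add_rdistrib: "((A::real^'n^'m) + B) ** C = A ** C + B ** C"
  by (simp add: matrix_matrix_mult_def vec_eq_iff sum.distrib algebra_simps)

lemma mm_sum_left: "(\<Sum>i\<in>S. f i) ** (B::real^'n^'m) = (\<Sum>i\<in>S. f i ** B)"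
  by (induction S rule: infinite_finite_induct) (auto simp: matrix_add_rdistrib)

lemma mm_sum_right: "(B::real^'n^'m) ** (\<Sum>i\<in>S. f i) = (\<Sum>i\<in>S. B ** f i)"
  by (induction S rule: infinite_finite_induct) (auto simp: matrix_add_ldistrib)

lemma transpose_sum: "transpose (\<Sum>i\<in>S. f i) = (\<Sum>i\<in>S. transpose (f i :: real^'n^'m))"
  by (induction S rule: infinite_finite_induct) (auto simp: transpose_def vec_eq_iff)

lemma transpose_add': "transpose ((A::real^'n^'m) + B) = transpose A + transpose B"
  by (simp add: transpose_def vec_eq_iff)

lemma bl_sandwich: "bounded_linear (\<lambda>X. (A::real^'n^'m) ** (X::real^'k^'n) ** (B::real^'l^'k))"
proof -
  have "linear (\<lambda>X. A ** (X::real^'k^'n) ** B)"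
    by (rule linearI) (simp_all add: matrix_add_ldistrib matrix_add_rdistrib mm_scaleR_left mm_scaleR_right)
  then show ?thesis by (simp add: linear_conv_bounded_linear)
qed

definition mu :: "real \<Rightarrow> nat \<Rightarrow> real^2^2" where
  "mu \<nu> k = mat2 (2*(\<nu>+1)*mm \<nu> (k+2) + 2*\<nu>*mm \<nu> k) ((2*\<nu>+1)* sqrt 2*mm \<nu> (k+1))
             ((2*\<nu>+1)* sqrt 2*mm \<nu> (k+1)) (\<nu>*mm \<nu> (k+2) + (\<nu>+1)*mm \<nu> k)"

lemma W2_split: "x^k *\<^sub>R W2 \<nu> x =
   (x^(k+2) * ww \<nu> x) *\<^sub>R mat2 (2*(\<nu>+1)) 0 0 \<nu> + (x^(k+1) * ww \<nu> x) *\<^sub>R mat2 0 ((2*\<nu>+1)* sqrt 2) ((2*\<nu>+1)* sqrt 2) 0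
   + (x^k * ww \<nu> x) *\<^sub>R mat2 (2*\<nu>) 0 0 (\<nu>+1)"
  unfolding mat_eq_iff2 by (simp add: W2_def ww_def algebra_simps power2_eq_square)

lemma mu_split: "mu \<nu> k =
   mm \<nu> (k+2) *\<^sub>R mat2 (2*(\<nu>+1)) 0 0 \<nu> + mm \<nu> (k+1) *\<^sub>R mat2 0 ((2*\<nu>+1)* sqrt 2) ((2*\<nu>+1)* sqrt 2) 0
   + mm \<nu> k *\<^sub>R mat2 (2*\<nu>) 0 0 (\<nu>+1)"
  unfolding mat_eq_iff2 by (simp add: mu_def algebra_simps)

lemma W2_moment:
  assumes "\<nu> > 0"
  shows "((\<lambda>x. x^k *\<^sub>R W2 \<nu> x) has_integral mu \<nu> k) {-1..1}"
  unfolding W2_split mu_split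
  by (intro has_integral_add has_integral_scaleR_left mm_has_integral[OF assms, of "k+2", simplified]
        mm_has_integral[OF assms])

definition ev :: "nat \<Rightarrow> (nat \<Rightarrow> real^2^2) \<Rightarrow> real \<Rightarrow> real^2^2" where
  "ev N c x = (\<Sum>k\<le>N. x^k *\<^sub>R c k)"

definition ipc :: "real \<Rightarrow> nat \<Rightarrow> (nat \<Rightarrow> real^2^2) \<Rightarrow> nat \<Rightarrow> (nat \<Rightarrow> real^2^2) \<Rightarrow> real^2^2" where
  "ipc \<nu> N c M d = (\<Sum>i\<le>N. \<Sum>j\<le>M. c i ** mu \<nu> (i+j) ** transpose (d j))"

lemma ev_integral:
  assumes "\<nu> > 0"
  shows "((\<lambda>x. ev N c x ** W2 \<nu> x ** transpose (ev M d x)) has_integral ipc \<nu> N c M d) {-1..1}"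
proof -
  have eq: "ev N c x ** W2 \<nu> x ** transpose (ev M d x) =
     (\<Sum>i\<le>N. \<Sum>j\<le>M. c i ** (x^(i+j) *\<^sub>R W2 \<nu> x) ** transpose (d j))" for x
    unfolding ev_def mm_sum_left transpose_sum mm_sum_right
    by (simp add: mm_scaleR_left mm_scaleR_right transpose_scalar power_add) (subst sum.swap, simp add: mult.commute)
  show ?thesis unfolding eq ipc_def
    by (intro has_integral_sum finite_atMost has_integral_linear[OF W2_moment[OF assms] bl_sandwich, unfolded o_def])
qed


lemma ev_nth: "ev N c x $ i $ j = (\<Sum>k\<le>N. c k $ i $ j * x^k)"
  by (simp add: ev_def sum_component mult.commute)

lemma poly_zero_on_interval:
  fixes c :: "nat \<Rightarrow> real"
  assumes "\<And>x. x \<in> {-1/2..1/2} \<Longrightarrow> (\<Sum>k\<le>N. c k * x^k) = 0" "k \<le> N"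
  shows "c k = 0"
proof (rule ccontr)
  assume "c k \<noteq> 0"
  from polyfun_rootbound[of N c] this assms(2) have "finite {z. (\<Sum>i\<le>N. c i * z^i) = 0}" by blast
  moreover have "{-1/2..1/2::real} \<subseteq> {z. (\<Sum>i\<le>N. c i * z^i) = 0}" using assms(1) by auto
  ultimately have "finite {-1/2..1/2::real}" by (rule finite_subset[rotated])
  then show False using infinite_Icc[of "-1/2" "1/2::real"] by simp
qed

lemma ww_pos: "x \<in> {-1/2..1/2} \<Longrightarrow> ww \<nu> x > 0"
proof -
  assume "x \<in> {-1/2..1/2}"
  then have "\<bar>x\<bar> < 1" by auto
  then have "1 - x\<^sup>2 > 0" by (simp add: abs_square_less_1)
  then show ?thesis by (simp add: ww_def)
qed

lemma sq2 [simp]: "sqrt 2 * sqrt 2 = 2" "sqrt 2 * (sqrt 2 * y) = 2 * y"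
  by (simp_all add: mult.assoc[symmetric])

lemma diag_entry:
  "((A::real^2^2) ** W2 \<nu> x ** transpose A) $ i $ i = ww \<nu> x *
     ((\<nu>+1) * (sqrt 2 * x * A$i$1 + A$i$2)\<^sup>2 + \<nu> * (sqrt 2 * A$i$1 + x * A$i$2)\<^sup>2)"
  by (simp add: W2_def ww_def algebra_simps power2_eq_square)

lemma positivity:
  assumes nu: "\<nu> > 0" and z: "ipc \<nu> N R N R = 0" and k: "k \<le> N"
  shows "R k = 0"
proof -
  have main: "(\<forall>k\<le>N. R k $ i $ 1 = 0) \<and> (\<forall>k\<le>N. R k $ i $ 2 = 0)" for i
  proof -
    define h where "h x = (ev N R x ** W2 \<nu> x ** transpose (ev N R x)) $ i $ i" for x
    define g where "g x = ((\<nu>+1) * (sqrt 2 * x * ev N R x$i$1 + ev N R x$i$2)\<^sup>2 + \<nu> * (sqrt 2 * ev N R x$i$1 + x * ev N R x$i$2)\<^sup>2)" for x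
    have hg: "h x = ww \<nu> x * g x" for x unfolding h_def g_def by (rule diag_entry)
    have g0: "g x \<ge> 0" for x unfolding g_def using nu by (intro add_nonneg_nonneg mult_nonneg_nonneg) auto
    have h0: "h x \<ge> 0" for x unfolding hg by (simp add: g0 ww_nonneg)
    have "(h has_integral (ipc \<nu> N R N R) $ i $ i) {-1..1}"
      unfolding h_def
      using has_integral_linear[OF ev_integral[OF nu, of N R N R]
         bounded_linear_compose[OF bounded_linear_vec_nth bounded_linear_vec_nth, of i i]]
      by (simp add: o_def)
    then have hi: "(h has_integral 0) {-1..1}" using z by simp
    have pos: "1 - x\<^sup>2 > 0" if "x \<in> {-1/2..1/2}" for x :: real
    proof -
      from that have "\<bar>x\<bar> < 1" by auto
      then show ?thesis by (simp add: abs_square_less_1)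
    qed
    have cont: "continuous_on {-1/2..1/2} h"
      unfolding hg g_def ww_def ev_nth
      by (intro continuous_intros continuous_on_powr') (use pos in force)+
    have hint: "h integrable_on {-1/2..1/2}"
      using integrable_on_subinterval[OF has_integral_integrable[OF hi], of "-1/2" "1/2"] by simp
    have "integral {-1/2..1/2} h \<le> integral {-1..1} h"
      by (rule integral_subset_le) (use hint hi h0 in auto)
    moreover have "integral {-1/2..1/2} h \<ge> 0" by (rule integral_nonneg[OF hint]) (simp add: h0)
    ultimately have "integral {-1/2..1/2} h = 0" using hi by (simp add: integral_unique)
    then have hi2: "(h has_integral 0) (cbox (-1/2) (1/2))" using hint by (metis cbox_interval has_integral_integral)
    have hz: "h x = 0" if "x \<in> {-1/2..1/2}" for x
      by (rule has_integral_0_cbox_imp_0[OF _ _ hi2]) (use cont h0 that in auto)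
    have pq: "ev N R x $ i $ 1 = 0 \<and> ev N R x $ i $ 2 = 0" if x: "x \<in> {-1/2..1/2}" for x
    proof -
      define p where "p = ev N R x$i$1"
      define q where "q = ev N R x$i$2"
      have "g x = 0" using hz[OF x] ww_pos[OF x, of \<nu>] unfolding hg by simp
      then have e: "(\<nu>+1) * (sqrt 2 * x * p + q)\<^sup>2 + \<nu> * (sqrt 2 * p + x * q)\<^sup>2 = 0"
        unfolding g_def p_def q_def .
      have n1: "(\<nu>+1) * (sqrt 2 * x * p + q)\<^sup>2 \<ge> 0" "\<nu> * (sqrt 2 * p + x * q)\<^sup>2 \<ge> 0"
        using nu by simp_all
      have "(\<nu>+1) * (sqrt 2 * x * p + q)\<^sup>2 = 0" "\<nu> * (sqrt 2 * p + x * q)\<^sup>2 = 0"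
        using e n1 by linarith+
      then have a': "sqrt 2 * x * p + q = 0" and b': "sqrt 2 * p + x * q = 0" using nu by simp_all
      have q: "q = - (sqrt 2 * x * p)" using a' by linarith
      have "sqrt 2 * p * (1 - x\<^sup>2) = sqrt 2 * p + x * q" unfolding q by (simp add: algebra_simps power2_eq_square)
      then have "sqrt 2 * p * (1 - x\<^sup>2) = 0" using b' by simp
      moreover have "1 - x\<^sup>2 \<noteq> 0" using pos[OF x] by simp
      ultimately have "p = 0" by simp
      with a' show ?thesis unfolding p_def q_def by simp
    qed
    show ?thesis
    proof (intro conjI allI impI)
      fix k assume "k \<le> N"
      show "R k $ i $ 1 = 0"
        by (rule poly_zero_on_interval[OF _ \<open>k \<le> N\<close>]) (use pq in \<open>auto simp: ev_nth\<close>)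
      show "R k $ i $ 2 = 0"
        by (rule poly_zero_on_interval[OF _ \<open>k \<le> N\<close>]) (use pq in \<open>auto simp: ev_nth\<close>)
    qed
  qed
  show ?thesis unfolding mat_eq_iff2 using main[of 1] main[of 2] k by simp
qed


definition F10 :: "real^2^2" where "F10 = mat2 0 (2 * sqrt 2) (sqrt 2) 0"
definition EE :: "real^2^2" where "EE = mat2 0 0 0 1"

definition TT :: "real \<Rightarrow> nat \<Rightarrow> nat \<Rightarrow> real^2^2" where
  "TT \<nu> i j = (real i * (real i - 1)) *\<^sub>R mu \<nu> (i+j-2) + real i *\<^sub>R (F10 ** mu \<nu> (i+j-1))
     + (EE - (real i * (real i + 2*\<nu> + 2)) *\<^sub>R mat 1) ** mu \<nu> (i+j)"

lemma TT_sym_ge2: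
  assumes nu: "\<nu> > 0" and s: "i + j = t + 2"
  shows "TT \<nu> i j = transpose (TT \<nu> j i)"
proof -
  have i1: "i + j - 2 = t" "i + j - 1 = t + 1" "j + i - 2 = t" "j + i - 1 = t + 1" "i + j = t + 2" "j + i = t + 2"
    using s by auto
  define M0 where "M0 = mm \<nu> t"
  define M1 where "M1 = mm \<nu> (t+1)"
  have e3: "t + 1 + 2 = t + 3" "t + 2 + 2 = t + 4" "t + 1 + 1 = t + 2" "t+2+1 = t+3" by simp_all
  have r0: "mm \<nu> (t+2) = (real t + 1) * M0 / (real t + 2*\<nu> + 2)"
    using mm_rec[OF nu, of t] nu unfolding M0_def by (simp add: field_simps)
  have r1: "mm \<nu> (t+3) = (real t + 2) * M1 / (real t + 2*\<nu> + 3)"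
    using mm_rec[OF nu, of "t+1", unfolded e3] nu unfolding M1_def by (simp add: field_simps)
  have r2: "mm \<nu> (t+4) = (real t + 3) * ((real t + 1) * M0 / (real t + 2*\<nu> + 2)) / (real t + 2*\<nu> + 4)"
  proof -
    define M2 where "M2 = mm \<nu> (t+2)"
    define M4 where "M4 = mm \<nu> (t+4)"
    have "real (t+2+1) * M2 = (real (t+2) + 2*\<nu> + 2) * M4"
      using mm_rec[OF nu, of "t+2"] unfolding e3 M2_def M4_def .
    then have "M4 = (real t + 3) * M2 / (real t + 2*\<nu> + 4)" using nu by (simp add: field_simps)
    then show ?thesis unfolding M4_def M2_def r0 .
  qed
  have jr: "real j = real t + 2 - real i" using s by (simp add: add.commute flip: of_nat_add)
  have d1: "real t + 2*\<nu> + 2 \<noteq> 0" "real t + 2*\<nu> + 3 \<noteq> 0" "real t + 2*\<nu> + 4 \<noteq> 0" using nu by simp_all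
  have mut: "mu \<nu> t = mat2 (2*(\<nu>+1)*mm \<nu> (t+2) + 2*\<nu>*mm \<nu> t) ((2*\<nu>+1) * sqrt 2*mm \<nu> (t+1))
             ((2*\<nu>+1) * sqrt 2*mm \<nu> (t+1)) (\<nu>*mm \<nu> (t+2) + (\<nu>+1)*mm \<nu> t)"
        "mu \<nu> (t+1) = mat2 (2*(\<nu>+1)*mm \<nu> (t+3) + 2*\<nu>*mm \<nu> (t+1)) ((2*\<nu>+1) * sqrt 2*mm \<nu> (t+2))
             ((2*\<nu>+1) * sqrt 2*mm \<nu> (t+2)) (\<nu>*mm \<nu> (t+3) + (\<nu>+1)*mm \<nu> (t+1))"
        "mu \<nu> (t+2) = mat2 (2*(\<nu>+1)*mm \<nu> (t+4) + 2*\<nu>*mm \<nu> (t+2)) ((2*\<nu>+1) * sqrt 2*mm \<nu> (t+3))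
             ((2*\<nu>+1) * sqrt 2*mm \<nu> (t+3)) (\<nu>*mm \<nu> (t+4) + (\<nu>+1)*mm \<nu> (t+2))"
    by (simp only: mu_def e3)+
  define D2 where "D2 = real t + 2*\<nu> + 2"
  define D3 where "D3 = real t + 2*\<nu> + 3"
  define D4 where "D4 = real t + 2*\<nu> + 4"
  have dd: "D2 \<noteq> 0" "D3 \<noteq> 0" "D4 \<noteq> 0" using d1 unfolding D2_def D3_def D4_def by auto
  have sqq: "sqrt 2 * (x * sqrt 2 * y) = 2 * (x * y)" for x y
    by (metis (no_types, opaque_lifting) mult.assoc mult.left_commute sq2(1))
  show ?thesis
    unfolding TT_def
    unfolding i1(1-4)
    unfolding i1(5,6)
    unfolding mut
    unfolding r0 r1 r2 M0_def[symmetric] M1_def[symmetric]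
    unfolding D2_def[symmetric] D3_def[symmetric] D4_def[symmetric]
    unfolding mat_eq_iff2 F10_def EE_def
    apply (simp add: jr sqq)
    apply (intro conjI)
    apply (simp_all add: field_simps dd)
    apply (simp_all add: D2_def D3_def D4_def algebra_simps)
    done
qed

lemma TT_sym:
  assumes nu: "\<nu> > 0"
  shows "TT \<nu> i j = transpose (TT \<nu> j i)"
proof (cases "i + j \<ge> 2")
  case True
  then obtain t where "i + j = t + 2" by (metis add.commute le_iff_add)
  then show ?thesis using TT_sym_ge2[OF nu] by blast
next
  case False
  have m1: "mm \<nu> 1 = 0" by (rule mm_1[OF nu])
  have m3: "mm \<nu> 3 = 0" using mm_rec[OF nu, of 1] m1 nu by (simp add: numeral_3_eq_3)
  have m0: "mm \<nu> 0 = (2*\<nu>+2) * mm \<nu> 2" using mm_rec[OF nu, of 0] by (simp add: numeral_2_eq_2)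
  have c10: "TT \<nu> 1 0 = transpose (TT \<nu> 0 1)"
    unfolding TT_def mat_eq_iff2 F10_def EE_def mu_def
    using m1 m3 m0 by (simp add: numeral_2_eq_2 numeral_3_eq_3 algebra_simps)
  from False have "(i = 0 \<and> j = 0) \<or> (i = 1 \<and> j = 0) \<or> (i = 0 \<and> j = 1)" by auto
  then show ?thesis
  proof (elim disjE conjE)
    assume "i = 0" "j = 0"
    then show ?thesis unfolding TT_def mat_eq_iff2 F10_def EE_def mu_def using m1 by simp
  next
    assume "i = 1" "j = 0"
    then show ?thesis using c10 by simp
  next
    assume "i = 0" "j = 1"
    then show ?thesis using arg_cong[OF c10, of transpose] by (simp add: transpose_transpose)
  qed
qed


lemma ev_extend:
  assumes "\<And>k. k > n \<Longrightarrow> c k = 0" "n \<le> N"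
  shows "ev N c x = ev n c x"
  using assms(2)
proof (induction N)
  case 0 then show ?case by simp
next
  case (Suc N)
  show ?case
  proof (cases "n \<le> N")
    case True
    then have "ev (Suc N) c x = ev N c x" using assms(1)[of "Suc N"] by (simp add: ev_def)
    then show ?thesis using Suc True by simp
  next
    case False
    then have "n = Suc N" using Suc by simp
    then show ?thesis by simp
  qed
qed

definition coef :: "(nat \<Rightarrow> real \<Rightarrow> real^2^2) \<Rightarrow> nat \<Rightarrow> nat \<Rightarrow> real^2^2" where
  "coef P n k = (if k = n then mat 1 else if k < n then
      (SOME A. \<forall>x. P n x = x ^ n *\<^sub>R mat 1 + (\<Sum>k<n. x ^ k *\<^sub>R A k)) k else 0)"

lemma coef_ev:
  assumes "monic_matpoly n (P n)"
  shows "P n x = ev n (coef P n) x"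
proof -
  define A where "A = (SOME A. \<forall>x. P n x = x ^ n *\<^sub>R mat 1 + (\<Sum>k<n. x ^ k *\<^sub>R A k))"
  have "\<forall>x. P n x = x ^ n *\<^sub>R mat 1 + (\<Sum>k<n. x ^ k *\<^sub>R A k)"
    using assms unfolding monic_matpoly_def A_def by (rule someI_ex)
  then have "P n x = x ^ n *\<^sub>R mat 1 + (\<Sum>k<n. x ^ k *\<^sub>R A k)" by blast
  also have "\<dots> = ev n (coef P n) x"
    unfolding ev_def coef_def A_def[symmetric]
    by (simp add: lessThan_Suc_atMost[symmetric] add.commute)
  finally show ?thesis .
qed

lemma coef_top [simp]: "coef P n n = mat 1" by (simp add: coef_def)
lemma coef_gt [simp]: "k > n \<Longrightarrow> coef P n k = 0" by (simp add: coef_def)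

lemma coef_evN:
  assumes "monic_matpoly n (P n)" "n \<le> N"
  shows "P n x = ev N (coef P n) x"
  using coef_ev[of n P, OF assms(1)] ev_extend[of n "coef P n" N x] assms(2) by simp

definition SS :: "real \<Rightarrow> (nat \<Rightarrow> real \<Rightarrow> real^2^2) \<Rightarrow> nat \<Rightarrow> nat \<Rightarrow> real^2^2" where
  "SS \<nu> P n j = (\<Sum>i\<le>n. coef P n i ** mu \<nu> (i+j))"

lemma ipc_orth:
  assumes nu: "\<nu> > 0" and M: "monic_MOPS (W2 \<nu>) P" and nm: "n \<noteq> m"
  shows "ipc \<nu> n (coef P n) m (coef P m) = 0"
proof -
  have mp: "monic_matpoly k (P k)" for k using M unfolding monic_MOPS_def by blast
  have "((\<lambda>x. P n x ** W2 \<nu> x ** transpose (P m x)) has_integral 0) {-1..1}"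
    using M nm unfolding monic_MOPS_def by blast
  moreover have "((\<lambda>x. P n x ** W2 \<nu> x ** transpose (P m x)) has_integral ipc \<nu> n (coef P n) m (coef P m)) {-1..1}"
    unfolding coef_ev[of n P, OF mp[of n]] coef_ev[of m P, OF mp[of m]] by (rule ev_integral[OF nu])
  ultimately show ?thesis using has_integral_unique by blast
qed

lemma ipc_SS: "ipc \<nu> n (coef P n) m d = (\<Sum>k\<le>m. SS \<nu> P n k ** transpose (d k))"
  unfolding ipc_def SS_def mm_sum_left by (subst sum.swap) simp

lemma SS_zero:
  assumes nu: "\<nu> > 0" and M: "monic_MOPS (W2 \<nu>) P"
  shows "j < n \<Longrightarrow> SS \<nu> P n j = 0"
proof (induction j rule: less_induct)
  case (less j)
  have "0 = ipc \<nu> n (coef P n) j (coef P j)" using ipc_orth[OF nu M, of n j] less.prems by simp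
  also have "\<dots> = (\<Sum>k\<le>j. SS \<nu> P n k ** transpose (coef P j k))" by (rule ipc_SS)
  also have "\<dots> = (\<Sum>k\<in>insert j {..<j}. SS \<nu> P n k ** transpose (coef P j k))"
    by (rule sum.cong) auto
  also have "\<dots> = SS \<nu> P n j" using less.IH less.prems by (simp add: sum.insert)
  finally show ?case by simp
qed


definition Lam :: "real \<Rightarrow> nat \<Rightarrow> real^2^2" where
  "Lam \<nu> k = EE - (real k * (real k + 2*\<nu> + 2)) *\<^sub>R mat 1"

definition Dop :: "real \<Rightarrow> (nat \<Rightarrow> real^2^2) \<Rightarrow> nat \<Rightarrow> real^2^2" where
  "Dop \<nu> c k = real ((k+2)*(k+1)) *\<^sub>R c (k+2) + real (k+1) *\<^sub>R (c (k+1) ** F10) + c k ** Lam \<nu> k"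

definition RR :: "real \<Rightarrow> (nat \<Rightarrow> real \<Rightarrow> real^2^2) \<Rightarrow> nat \<Rightarrow> nat \<Rightarrow> real^2^2" where
  "RR \<nu> P n k = Dop \<nu> (coef P n) k - Lam \<nu> n ** coef P n k"

lemma matrix_diff_rdistrib: "((A::real^'n^'m) - B) ** C = A ** C - B ** C"
  by (simp add: matrix_matrix_mult_def vec_eq_iff sum_subtractf algebra_simps)

lemma transpose_zero' [simp]: "transpose (0::real^'n^'m) = 0"
  by (simp add: transpose_def vec_eq_iff)

lemma mm_zero_right [simp]: "(A::real^'n^'m) ** (0::real^'k^'n) = 0"
  by (simp add: matrix_matrix_mult_def vec_eq_iff)

lemma shift1:
  fixes F :: "nat \<Rightarrow> 'a::comm_monoid_add"
  assumes "F 0 = 0" "F (Suc n) = 0"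
  shows "(\<Sum>k\<le>n. F (k+1)) = (\<Sum>i\<le>n. F i)"
proof -
  have "(\<Sum>i\<le>Suc n. F i) = F 0 + (\<Sum>k\<le>n. F (Suc k))" by (rule sum.atMost_Suc_shift)
  then show ?thesis using assms by simp
qed

lemma shift2:
  fixes F :: "nat \<Rightarrow> 'a::comm_monoid_add"
  assumes "F 0 = 0" "F 1 = 0" "F (Suc n) = 0" "F (Suc (Suc n)) = 0"
  shows "(\<Sum>k\<le>n. F (k+2)) = (\<Sum>i\<le>n. F i)"
proof -
  have "(\<Sum>i\<le>Suc (Suc n). F i) = F 0 + (\<Sum>k\<le>Suc n. F (Suc k))" by (rule sum.atMost_Suc_shift)
  also have "(\<Sum>k\<le>Suc n. F (Suc k)) = F 1 + (\<Sum>k\<le>n. F (Suc (Suc k)))" by (subst sum.atMost_Suc_shift) simp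
  finally show ?thesis using assms by simp
qed

lemma transpose_mm: "transpose ((A::real^'n^'n) ** B) = transpose B ** transpose A"
  by (rule matrix_transpose_mul)

lemma mu_sym: "transpose (mu \<nu> k) = mu \<nu> k"
  unfolding mat_eq_iff2 mu_def by simp

lemma EE_sym: "transpose EE = EE" unfolding mat_eq_iff2 EE_def by simp
lemma Lam_sym: "transpose (Lam \<nu> k) = Lam \<nu> k" unfolding mat_eq_iff2 Lam_def EE_def by simp

lemma TT_alt: "TT \<nu> i j = (real i * (real i - 1)) *\<^sub>R mu \<nu> (i+j-2) + real i *\<^sub>R (F10 ** mu \<nu> (i+j-1))
     + Lam \<nu> i ** mu \<nu> (i+j)"
  unfolding TT_def Lam_def ..

lemma Dop_sum:
  assumes "\<And>k. k > n \<Longrightarrow> c k = 0"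
  shows "(\<Sum>k\<le>n. Dop \<nu> c k ** mu \<nu> (k+j)) = (\<Sum>i\<le>n. c i ** TT \<nu> i j)"
proof -
  define F2 where "F2 i = (real i * (real i - 1)) *\<^sub>R (c i ** mu \<nu> (i+j-2))" for i
  define F1 where "F1 i = real i *\<^sub>R (c i ** F10 ** mu \<nu> (i+j-1))" for i
  define F0 where "F0 i = c i ** Lam \<nu> i ** mu \<nu> (i+j)" for i
  have "Dop \<nu> c k ** mu \<nu> (k+j) = F2 (k+2) + F1 (k+1) + F0 k" for k
    unfolding Dop_def F2_def F1_def F0_def
    by (simp add: matrix_add_rdistrib mm_scaleR_left algebra_simps)
  then have "(\<Sum>k\<le>n. Dop \<nu> c k ** mu \<nu> (k+j)) = (\<Sum>k\<le>n. F2 (k+2)) + (\<Sum>k\<le>n. F1 (k+1)) + (\<Sum>k\<le>n. F0 k)"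
    by (simp add: sum.distrib)
  also have "(\<Sum>k\<le>n. F2 (k+2)) = (\<Sum>k\<le>n. F2 k)"
    by (rule shift2) (simp_all add: F2_def assms)
  also have "(\<Sum>k\<le>n. F1 (k+1)) = (\<Sum>k\<le>n. F1 k)"
    by (rule shift1) (simp_all add: F1_def assms)
  also have "(\<Sum>k\<le>n. F2 k) + (\<Sum>k\<le>n. F1 k) + (\<Sum>k\<le>n. F0 k) = (\<Sum>i\<le>n. c i ** TT \<nu> i j)"
    unfolding sum.distrib[symmetric] TT_alt F2_def F1_def F0_def
    by (simp add: matrix_add_ldistrib mm_scaleR_right matrix_mul_assoc)
  finally show ?thesis .
qed

lemma RR_top:
  assumes "k \<ge> n"
  shows "RR \<nu> P n k = 0"
proof (cases "k = n")
  case True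
  then show ?thesis unfolding RR_def Dop_def by simp
next
  case False
  then show ?thesis using assms unfolding RR_def Dop_def by simp
qed

lemma RR_orth:
  assumes nu: "\<nu> > 0" and M: "monic_MOPS (W2 \<nu>) P" and j: "j < n"
  shows "(\<Sum>k\<le>n. RR \<nu> P n k ** mu \<nu> (k+j)) = 0"
proof -
  have S: "SS \<nu> P n l = 0" if "l \<le> j" for l using SS_zero[OF nu M] that j by simp
  have s1: "RR \<nu> P n k ** mu \<nu> (k+j) = Dop \<nu> (coef P n) k ** mu \<nu> (k+j) - Lam \<nu> n ** (coef P n k ** mu \<nu> (k+j))" for k
    unfolding RR_def matrix_diff_rdistrib matrix_mul_assoc ..
  have "(\<Sum>k\<le>n. RR \<nu> P n k ** mu \<nu> (k+j)) =
        (\<Sum>k\<le>n. Dop \<nu> (coef P n) k ** mu \<nu> (k+j)) - Lam \<nu> n ** SS \<nu> P n j"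
    unfolding s1 sum_subtractf SS_def mm_sum_right ..
  also have "(\<Sum>k\<le>n. Dop \<nu> (coef P n) k ** mu \<nu> (k+j)) = (\<Sum>i\<le>n. coef P n i ** TT \<nu> i j)"
    by (rule Dop_sum) simp
  also have "\<dots> = (\<Sum>i\<le>n. coef P n i ** transpose (TT \<nu> j i))"
  proof -
    have "TT \<nu> i j = transpose (TT \<nu> j i)" for i by (rule TT_sym[OF nu])
    then show ?thesis by (simp only:)
  qed
  also have "\<dots> = (real j * (real j - 1)) *\<^sub>R SS \<nu> P n (j-2) + real j *\<^sub>R (SS \<nu> P n (j-1) ** transpose F10)
       + SS \<nu> P n j ** Lam \<nu> j"
  proof -
    have ee: "real j * (real j - 1) = 0 \<or> j + i - 2 = i + (j-2)" for i
      by (cases "j \<ge> 2") (auto dest: less_2_cases)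
    have e: "(real j * (real j - 1)) *\<^sub>R mu \<nu> (j + i - 2) = (real j * (real j - 1)) *\<^sub>R mu \<nu> (i + (j - 2))" for i
      using ee[of i] by auto
    have e2': "j \<noteq> 0 \<Longrightarrow> j + i - 1 = i + (j-1)" for i by simp
    have e3: "mu \<nu> (j+i) = mu \<nu> (i+j)" for i by (simp add: add.commute)
    have t: "transpose (TT \<nu> j i) = (real j * (real j - 1)) *\<^sub>R mu \<nu> (j + i - 2) + real j *\<^sub>R (mu \<nu> (j+i-1) ** transpose F10)
        + mu \<nu> (j+i) ** Lam \<nu> j" for i
      unfolding TT_alt transpose_add' transpose_scalar transpose_mm mu_sym Lam_sym ..
    have "coef P n i ** transpose (TT \<nu> j i) =
       (real j * (real j - 1)) *\<^sub>R (coef P n i ** mu \<nu> (i + (j-2))) + real j *\<^sub>R (coef P n i ** mu \<nu> (i + (j-1)) ** transpose F10)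
       + coef P n i ** mu \<nu> (i+j) ** Lam \<nu> j" for i
      unfolding t e e3 matrix_add_ldistrib mm_scaleR_right mm_scaleR_left matrix_mul_assoc
      using e2'[of i] by (cases "j = 0") simp_all
    then show ?thesis
      unfolding SS_def by (simp add: sum.distrib mm_sum_left scaleR_sum_right)
  qed
  also have "\<dots> = 0" using S by (cases "j \<ge> 2"; cases "j \<ge> 1") auto
  finally show ?thesis using S by simp
qed

lemma RR_zero:
  assumes nu: "\<nu> > 0" and M: "monic_MOPS (W2 \<nu>) P"
  shows "RR \<nu> P n k = 0"
proof (cases "k \<le> n")
  case True
  have "ipc \<nu> n (RR \<nu> P n) n (RR \<nu> P n) = (\<Sum>j\<le>n. (\<Sum>k\<le>n. RR \<nu> P n k ** mu \<nu> (k+j)) ** transpose (RR \<nu> P n j))"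
    unfolding ipc_def mm_sum_left by (subst sum.swap) simp
  also have "\<dots> = 0"
  proof (rule sum.neutral, rule ballI)
    fix j assume "j \<in> {..n}"
    then show "(\<Sum>k\<le>n. RR \<nu> P n k ** mu \<nu> (k+j)) ** transpose (RR \<nu> P n j) = 0"
      using RR_orth[OF nu M, of j n] RR_top[of n j \<nu> P] by (cases "j < n") auto
  qed
  finally show ?thesis using positivity[OF nu _ True] by blast
next
  case False
  then show ?thesis using RR_top by simp
qed


lemma X_formula:
  assumes nu: "\<nu> > 0" and M: "monic_MOPS (W2 \<nu>) P"
  shows "coef P (Suc (Suc p)) (Suc p) = mat2 0 (- sqrt 2 * (real p + 2) / (real p + \<nu> + 3))
                                          (- sqrt 2 * (real p + 2) / (2 * (real p + \<nu> + 2))) 0"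
proof -
  define X where "X = coef P (Suc (Suc p)) (Suc p)"
  have "RR \<nu> P (Suc (Suc p)) (Suc p) = 0" by (rule RR_zero[OF nu M])
  then have E: "(2*\<nu> + 2*real p + 5) * X$1$1 = 0 \<and> (2*\<nu> + 2*real p + 6) * X$1$2 + sqrt 2 * (2*real p + 4) = 0 \<and>
     (2*\<nu>+2*real p+4) * X$2$1 + sqrt 2 * (real p + 2) = 0 \<and> (2*\<nu> + 2*real p + 5) * X$2$2 = 0"
    unfolding RR_def Dop_def Lam_def mat_eq_iff2 EE_def F10_def
    by (simp add: algebra_simps X_def[symmetric])
  have d: "2*\<nu> + 2*real p + 5 \<noteq> 0" "2*\<nu> + 2*real p + 6 \<noteq> 0" "2*\<nu> + 2*real p + 4 \<noteq> 0"
     "real p + \<nu> + 3 \<noteq> 0" "real p + \<nu> + 2 \<noteq> 0" using nu by linarith+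
  have x11: "X$1$1 = 0" using E d by simp
  have x22: "X$2$2 = 0" using E d by simp
  have x12: "X$1$2 = - sqrt 2 * (real p + 2) / (real p + \<nu> + 3)"
    using E d by (simp add: field_simps)
  have x21: "X$2$1 = - sqrt 2 * (real p + 2) / (2 * (real p + \<nu> + 2))"
    using E d by (simp add: field_simps)
  show ?thesis unfolding X_def[symmetric] mat_eq_iff2 using x11 x12 x21 x22 by simp
qed

lemma Y_formula:
  assumes nu: "\<nu> > 0" and M: "monic_MOPS (W2 \<nu>) P"
  shows "coef P (Suc (Suc p)) p = mat2 (- (real p + 2) * (real p + 1) * (real p + \<nu> + 1) / (4 * (real p + \<nu> + 2) * (real p + \<nu> + 3))) 0 0
                                      (- (real p + 2) * (real p + 1) * (real p + \<nu>) / (4 * (real p + \<nu> + 2)\<^sup>2))"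
proof -
  define X where "X = coef P (Suc (Suc p)) (Suc p)"
  define Y where "Y = coef P (Suc (Suc p)) p"
  have X: "X$1$1 = 0" "X$2$2 = 0" "X$1$2 = - sqrt 2 * (real p + 2) / (real p + \<nu> + 3)"
     "X$2$1 = - sqrt 2 * (real p + 2) / (2 * (real p + \<nu> + 2))"
    unfolding X_def X_formula[OF nu M] by simp_all
  have "RR \<nu> P (Suc (Suc p)) p = 0" by (rule RR_zero[OF nu M])
  then have E: "2 + real p * real p + real p * 3 + (4 * real p + 4*\<nu> + 8) * Y$1$1 + (real p + 1) * (sqrt 2 * X$1$2) = 0 \<and>
     (4 * real p + 4 * \<nu> + 9) * Y$1$2 + 2 * (real p + 1) * (sqrt 2 * X$1$1) = 0 \<and>
     (4 * real p + 4 * \<nu> + 7) * Y$2$1 + (real p + 1) * (sqrt 2 * X$2$2) = 0 \<and>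
     2 + real p * real p + real p * 3 + (4 * real p + 4*\<nu> + 8) * Y$2$2 + 2 * (real p + 1) * (sqrt 2 * X$2$1) = 0"
    unfolding RR_def Dop_def Lam_def mat_eq_iff2 EE_def F10_def
    by (simp add: algebra_simps X_def[symmetric] Y_def[symmetric])
  have d: "4 * real p + 4 * \<nu> + 9 \<noteq> 0" "4 * real p + 4 * \<nu> + 7 \<noteq> 0" "4 * real p + 4 * \<nu> + 8 \<noteq> 0"
     "real p + \<nu> + 3 \<noteq> 0" "real p + \<nu> + 2 \<noteq> 0" using nu by linarith+
  define D2 where "D2 = real p + \<nu> + 2"
  define D3 where "D3 = real p + \<nu> + 3"
  have dD: "D2 \<noteq> 0" "D3 \<noteq> 0" using d unfolding D2_def D3_def by auto
  have sx: "sqrt 2 * X$1$2 = - 2 * (real p + 2) / D3"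
      "sqrt 2 * X$2$1 = - (real p + 2) / D2"
      "sqrt 2 * X$1$1 = 0" "sqrt 2 * X$2$2 = 0"
    unfolding X D2_def D3_def using d nu by (simp_all add: field_simps)
  note E2 = E[unfolded sx]
  have y12: "Y$1$2 = 0" using E d X by simp
  have y21: "Y$2$1 = 0" using E d X by simp
  have ls: "y = v" if "c \<noteq> 0" "c * y + r = 0" "c * v + r = 0" for c y v r :: real
    using that by (metis add_right_cancel mult_cancel_left)
  have y11: "Y$1$1 = - (real p + 2) * (real p + 1) * (real p + \<nu> + 1) / (4 * D2 * D3)"
  proof (rule ls)
    show "(4 * real p + 4*\<nu> + 8) * Y$1$1 + (2 + real p * real p + real p * 3 + (real p + 1) * (- 2 * (real p + 2) / D3)) = 0"
      using E2 by (simp add: algebra_simps)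
    show "(4 * real p + 4*\<nu> + 8) * (- (real p + 2) * (real p + 1) * (real p + \<nu> + 1) / (4 * D2 * D3))
       + (2 + real p * real p + real p * 3 + (real p + 1) * (- 2 * (real p + 2) / D3)) = 0"
      using dD by (simp add: field_simps) (simp add: D2_def D3_def algebra_simps)
  qed (use d in auto)
  have y22: "Y$2$2 = - (real p + 2) * (real p + 1) * (real p + \<nu>) / (4 * D2 * D2)"
  proof (rule ls)
    show "(4 * real p + 4*\<nu> + 8) * Y$2$2 + (2 + real p * real p + real p * 3 + 2 * (real p + 1) * (- (real p + 2) / D2)) = 0"
      using E2 by (simp add: algebra_simps)
    show "(4 * real p + 4*\<nu> + 8) * (- (real p + 2) * (real p + 1) * (real p + \<nu>) / (4 * D2 * D2))
       + (2 + real p * real p + real p * 3 + 2 * (real p + 1) * (- (real p + 2) / D2)) = 0"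
      using dD by (simp add: field_simps) (simp add: D2_def algebra_simps)
  qed (use d in auto)
  have y11': "Y$1$1 = - (real p + 2) * (real p + 1) * (real p + \<nu> + 1) / (4 * (real p + \<nu> + 2) * (real p + \<nu> + 3))"
    using y11 unfolding D2_def D3_def .
  have y22': "Y$2$2 = - (real p + 2) * (real p + 1) * (real p + \<nu>) / (4 * (real p + \<nu> + 2)\<^sup>2)"
    using y22 unfolding D2_def by (simp add: power2_eq_square mult.assoc)
  show ?thesis unfolding Y_def[symmetric] mat_eq_iff2 using y11' y12 y21 y22' by simp
qed


definition Xf :: "real \<Rightarrow> real \<Rightarrow> real^2^2" where
  "Xf \<nu> r = mat2 0 (- sqrt 2 * r / (r + \<nu> + 1)) (- sqrt 2 * r / (2 * (r + \<nu>))) 0"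

definition Yf :: "real \<Rightarrow> real \<Rightarrow> real^2^2" where
  "Yf \<nu> r = mat2 (- r * (r - 1) * (r + \<nu> - 1) / (4 * (r + \<nu>) * (r + \<nu> + 1))) 0 0
                  (- r * (r - 1) * (r + \<nu> - 2) / (4 * (r + \<nu>)\<^sup>2))"

lemma Xf_coef:
  assumes nu: "\<nu> > 0" and M: "monic_MOPS (W2 \<nu>) P" and m: "m \<ge> 2"
  shows "coef P m (m-1) = Xf \<nu> (real m)"
proof -
  obtain p where p: "m = Suc (Suc p)" using m by (metis add_2_eq_Suc le_Suc_ex)
  have e: "m - 1 = Suc p" "real m = real p + 2" using p by simp_all
  show ?thesis unfolding e unfolding p X_formula[OF nu M] Xf_def mat_eq_iff2
    by (simp add: algebra_simps)
qed

lemma Yf_coef: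
  assumes nu: "\<nu> > 0" and M: "monic_MOPS (W2 \<nu>) P" and m: "m \<ge> 2"
  shows "coef P m (m-2) = Yf \<nu> (real m)"
proof -
  obtain p where p: "m = Suc (Suc p)" using m by (metis add_2_eq_Suc le_Suc_ex)
  have e: "m - 2 = p" "real m = real p + 2" using p by simp_all
  show ?thesis unfolding e unfolding p Y_formula[OF nu M] Yf_def mat_eq_iff2
    by (simp add: algebra_simps)
qed

lemma ev_zero:
  assumes "\<forall>x. ev N c x = 0" "k \<le> N"
  shows "c k = 0"
proof -
  have "c k $ i $ j = 0" for i j
  proof -
    have "(\<Sum>k\<le>N. c k $ i $ j * x^k) = 0" for x using assms(1) ev_nth[of N c x i j] by simp
    then show ?thesis using polyfun_eq_0[of "\<lambda>k. c k $ i $ j" N] assms(2) by blast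
  qed
  then show ?thesis by (simp add: vec_eq_iff)
qed

lemma ev_shift: "x *\<^sub>R ev N c x = ev (Suc N) (\<lambda>k. if k = 0 then 0 else c (k - 1)) x"
  unfolding ev_def by (subst sum.atMost_Suc_shift) (simp add: scaleR_sum_right)

lemma ev_mul: "B ** ev N c x = ev N (\<lambda>k. B ** c k) x"
  unfolding ev_def mm_sum_right mm_scaleR_right ..

lemma ev_lin: "ev N c x - ev N d x - ev N e x - ev N f x = ev N (\<lambda>k. c k - d k - e k - f k) x"
  unfolding ev_def by (simp add: sum_subtractf scaleR_diff_right)

lemma rec_coefs:
  assumes M: "monic_MOPS (W2 \<nu>) P"
    and R: "\<forall>n x. x *\<^sub>R P (Suc n) x = P (Suc (Suc n)) x + B (Suc n) ** P (Suc n) x + C (Suc n) ** P n x"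
  shows "B (Suc n) = coef P (Suc n) n - coef P (Suc (Suc n)) (Suc n)"
    and "n \<ge> 1 \<Longrightarrow> C (Suc n) = coef P (Suc n) (n - 1) - coef P (Suc (Suc n)) n - B (Suc n) ** coef P (Suc n) n"
proof -
  have mp: "monic_matpoly k (P k)" for k using M unfolding monic_MOPS_def by blast
  define N where "N = Suc (Suc n)"
  define f where "f k = (if k = 0 then 0 else coef P (Suc n) (k - 1)) - coef P (Suc (Suc n)) k
     - B (Suc n) ** coef P (Suc n) k - C (Suc n) ** coef P n k" for k
  have "ev (Suc N) f x = 0" for x
  proof -
    have e1: "P (Suc n) x = ev N (coef P (Suc n)) x" by (rule coef_evN[of "Suc n" P, OF mp]) (simp add: N_def)
    have e2: "P k x = ev (Suc N) (coef P k) x" if "k \<le> Suc N" for k by (rule coef_evN[of k P, OF mp that])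
    have "x *\<^sub>R P (Suc n) x - P (Suc (Suc n)) x - B (Suc n) ** P (Suc n) x - C (Suc n) ** P n x = 0"
      unfolding spec[OF spec[OF R, of n], of x] by simp
    then show ?thesis
      unfolding f_def
      apply (subst (asm) e1)
      apply (subst (asm) e2[of "Suc (Suc n)"], simp add: N_def)
      apply (subst (asm) e2[of "Suc n"], simp add: N_def)
      apply (subst (asm) e2[of n], simp add: N_def)
      unfolding ev_shift ev_mul ev_lin .
  qed
  then have f0: "f k = 0" if "k \<le> Suc N" for k using ev_zero that by blast
  show "B (Suc n) = coef P (Suc n) n - coef P (Suc (Suc n)) (Suc n)"
    using f0[of "Suc n"] unfolding f_def N_def by simp
  assume "n \<ge> 1"
  then show "C (Suc n) = coef P (Suc n) (n - 1) - coef P (Suc (Suc n)) n - B (Suc n) ** coef P (Suc n) n"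
    using f0[of n] unfolding f_def N_def by (simp add: algebra_simps)
qed

lemma BC_formula:
  assumes nu: "\<nu> > 0" and M: "monic_MOPS (W2 \<nu>) P"
    and R: "\<forall>n x. x *\<^sub>R P (Suc n) x = P (Suc (Suc n)) x + B (Suc n) ** P (Suc n) x + C (Suc n) ** P n x"
    and m: "m \<ge> 2"
  shows "B m = Xf \<nu> (real m) - Xf \<nu> (real m + 1)"
    and "C m = Yf \<nu> (real m) - Yf \<nu> (real m + 1) - (Xf \<nu> (real m) - Xf \<nu> (real m + 1)) ** Xf \<nu> (real m)"
proof -
  obtain n where n0: "m = Suc n" using m by (cases m) auto
  then have n: "m = Suc n" "n \<ge> 1" using m by auto
  have i1: "m - 1 = n" "m - 2 = n - 1" "Suc m - 1 = Suc n" "Suc m - 2 = n" "real (Suc m) = real m + 1" using n by simp_all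
  have x1: "coef P (Suc n) n = Xf \<nu> (real m)" using Xf_coef[OF nu M m] unfolding i1 n(1)[symmetric] .
  have x2: "coef P (Suc (Suc n)) (Suc n) = Xf \<nu> (real m + 1)"
    using Xf_coef[OF nu M, of "Suc m"] m unfolding i1 n(1)[symmetric] by simp
  have y1: "coef P (Suc n) (n - 1) = Yf \<nu> (real m)" using Yf_coef[OF nu M m] unfolding i1 n(1)[symmetric] .
  have y2: "coef P (Suc (Suc n)) n = Yf \<nu> (real m + 1)"
    using Yf_coef[OF nu M, of "Suc m"] m unfolding i1 n(1)[symmetric] by simp
  have b: "B (Suc n) = Xf \<nu> (real m) - Xf \<nu> (real m + 1)"
    using rec_coefs(1)[OF M R, of n] unfolding x1 x2 .
  then show "B m = Xf \<nu> (real m) - Xf \<nu> (real m + 1)" using n(1) by simp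
  have "C (Suc n) = Yf \<nu> (real m) - Yf \<nu> (real m + 1) - (Xf \<nu> (real m) - Xf \<nu> (real m + 1)) ** Xf \<nu> (real m)"
    using rec_coefs(2)[OF M R n(2)] unfolding x1 y1 y2 b .
  then show "C m = Yf \<nu> (real m) - Yf \<nu> (real m + 1) - (Xf \<nu> (real m) - Xf \<nu> (real m + 1)) ** Xf \<nu> (real m)"
    using n(1) by simp
qed


lemma norm_le4: "norm (A::real^2^2) \<le> \<bar>A$1$1\<bar> + \<bar>A$1$2\<bar> + \<bar>A$2$1\<bar> + \<bar>A$2$2\<bar>"
proof -
  have "norm A \<le> (\<Sum>i\<in>UNIV. norm (A$i))"
    unfolding norm_vec_def by (rule L2_set_le_sum) simp
  also have "\<dots> = norm (A$1) + norm (A$2)" by (simp add: sum_2)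
  also have "norm (A$1) \<le> \<bar>A$1$1\<bar> + \<bar>A$1$2\<bar>" using norm_le_l1_cart[of "A$1"] by (simp add: sum_2)
  also have "norm (A$2) \<le> \<bar>A$2$1\<bar> + \<bar>A$2$2\<bar>" using norm_le_l1_cart[of "A$2"] by (simp add: sum_2)
  finally show ?thesis by simp
qed

lemma B_closed:
  assumes nu: "\<nu> > 0" and r: "r \<ge> 1"
  shows "(Xf \<nu> r - Xf \<nu> (r+1) - (1 / r\<^sup>2) *\<^sub>R mat2 0 (sqrt 2 * (1 + \<nu>)) (\<nu> / sqrt 2) 0) $ 1 $ 2
           = - sqrt 2 * (\<nu>+1) * ((2*\<nu>+3) * r + (\<nu>+1)*(\<nu>+2)) / (r\<^sup>2 * (r+\<nu>+1) * (r+\<nu>+2))"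
    and "(Xf \<nu> r - Xf \<nu> (r+1) - (1 / r\<^sup>2) *\<^sub>R mat2 0 (sqrt 2 * (1 + \<nu>)) (\<nu> / sqrt 2) 0) $ 2 $ 1
           = - sqrt 2 * \<nu> * ((2*\<nu>+1) * r + \<nu>*(\<nu>+1)) / (2 * r\<^sup>2 * (r+\<nu>) * (r+\<nu>+1))"
    and "(Xf \<nu> r - Xf \<nu> (r+1) - (1 / r\<^sup>2) *\<^sub>R mat2 0 (sqrt 2 * (1 + \<nu>)) (\<nu> / sqrt 2) 0) $ 1 $ 1 = 0"
    and "(Xf \<nu> r - Xf \<nu> (r+1) - (1 / r\<^sup>2) *\<^sub>R mat2 0 (sqrt 2 * (1 + \<nu>)) (\<nu> / sqrt 2) 0) $ 2 $ 2 = 0"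
proof -
  define s0 where "s0 = r + \<nu>"
  define s1 where "s1 = r + \<nu> + 1"
  define s2 where "s2 = r + \<nu> + 2"
  have sn: "s0 \<noteq> 0" "s1 \<noteq> 0" "s2 \<noteq> 0" "r \<noteq> 0" using nu r unfolding s0_def s1_def s2_def by auto
  have X1: "Xf \<nu> r = mat2 0 (- sqrt 2 * r / s1) (- sqrt 2 * r / (2 * s0)) 0"
    unfolding Xf_def s0_def s1_def ..
  have X2: "Xf \<nu> (r+1) = mat2 0 (- sqrt 2 * (r+1) / s2) (- sqrt 2 * (r+1) / (2 * s1)) 0"
    unfolding Xf_def s1_def s2_def mat_eq_iff2 by (simp add: algebra_simps)
  have q: "\<nu> / sqrt 2 = sqrt 2 * \<nu> / 2"
    by (simp add: field_simps)
  show "(Xf \<nu> r - Xf \<nu> (r+1) - (1 / r\<^sup>2) *\<^sub>R mat2 0 (sqrt 2 * (1 + \<nu>)) (\<nu> / sqrt 2) 0) $ 1 $ 2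
           = - sqrt 2 * (\<nu>+1) * ((2*\<nu>+3) * r + (\<nu>+1)*(\<nu>+2)) / (r\<^sup>2 * (r+\<nu>+1) * (r+\<nu>+2))"
    unfolding X1 X2 s1_def[symmetric] s2_def[symmetric] using sn
    by (simp add: field_simps) (simp add: s0_def s1_def s2_def algebra_simps power2_eq_square)
  show "(Xf \<nu> r - Xf \<nu> (r+1) - (1 / r\<^sup>2) *\<^sub>R mat2 0 (sqrt 2 * (1 + \<nu>)) (\<nu> / sqrt 2) 0) $ 2 $ 1
           = - sqrt 2 * \<nu> * ((2*\<nu>+1) * r + \<nu>*(\<nu>+1)) / (2 * r\<^sup>2 * (r+\<nu>) * (r+\<nu>+1))"
    unfolding X1 X2 q s1_def[symmetric] unfolding s0_def[symmetric] using sn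
    by (simp add: field_simps) (simp add: s0_def s1_def s2_def algebra_simps power2_eq_square)
  show "(Xf \<nu> r - Xf \<nu> (r+1) - (1 / r\<^sup>2) *\<^sub>R mat2 0 (sqrt 2 * (1 + \<nu>)) (\<nu> / sqrt 2) 0) $ 1 $ 1 = 0"
    unfolding X1 X2 by simp
  show "(Xf \<nu> r - Xf \<nu> (r+1) - (1 / r\<^sup>2) *\<^sub>R mat2 0 (sqrt 2 * (1 + \<nu>)) (\<nu> / sqrt 2) 0) $ 2 $ 2 = 0"
    unfolding X1 X2 by simp
qed

lemma sqp: "sqrt 2 * a / b * (- sqrt 2 * c / d) = - (2 * (a * c) / (b * d))"
proof -
  have "sqrt 2 * a / b * (- sqrt 2 * c / d) = - ((sqrt 2 * sqrt 2) * (a * c) / (b * d))"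
    by (simp only: times_divide_times_eq mult_minus_left mult_minus_right minus_divide_left) (simp only: ac_simps)
  then show ?thesis by simp
qed

lemma C_closed:
  assumes nu: "\<nu> > 0" and r: "r \<ge> 1"
  defines "CC \<equiv> Yf \<nu> r - Yf \<nu> (r+1) - (Xf \<nu> r - Xf \<nu> (r+1)) ** Xf \<nu> r - (1/4) *\<^sub>R mat 1"
  shows "CC $ 1 $ 1 = - \<nu> * (\<nu>+1) / (4 * (r+\<nu>) * (r+\<nu>+1))"
    and "CC $ 2 $ 2 = - ((\<nu>*\<nu>+\<nu>+2) * r * r + (2*\<nu>*\<nu>*\<nu> + 3*\<nu>*\<nu> + 5*\<nu> + 2) * r + \<nu>*\<nu>*(\<nu>+1)*(\<nu>+1))
             / (4 * (r+\<nu>) * (r+\<nu>) * (r+\<nu>+1) * (r+\<nu>+1))"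
    and "CC $ 1 $ 2 = 0" and "CC $ 2 $ 1 = 0"
proof -
  define s0 where "s0 = r + \<nu>"
  define s1 where "s1 = r + \<nu> + 1"
  define s2 where "s2 = r + \<nu> + 2"
  have sn: "s0 \<noteq> 0" "s1 \<noteq> 0" "s2 \<noteq> 0" "r \<noteq> 0" using nu r unfolding s0_def s1_def s2_def by auto
  have X1: "Xf \<nu> r = mat2 0 (- sqrt 2 * r / s1) (- sqrt 2 * r / (2 * s0)) 0"
    unfolding Xf_def s0_def s1_def ..
  have X2: "Xf \<nu> (r+1) = mat2 0 (- sqrt 2 * (r+1) / s2) (- sqrt 2 * (r+1) / (2 * s1)) 0"
    unfolding Xf_def s1_def s2_def mat_eq_iff2 by (simp add: algebra_simps)
  have Y1: "Yf \<nu> r = mat2 (- r * (r - 1) * (r + \<nu> - 1) / (4 * s0 * s1)) 0 0 (- r * (r - 1) * (r + \<nu> - 2) / (4 * s0 * s0))"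
    unfolding Yf_def s0_def s1_def mat_eq_iff2 by (simp add: power2_eq_square)
  have Y2: "Yf \<nu> (r+1) = mat2 (- (r+1) * r * (r + \<nu>) / (4 * s1 * s2)) 0 0 (- (r+1) * r * (r + \<nu> - 1) / (4 * s1 * s1))"
    unfolding Yf_def s1_def s2_def mat_eq_iff2 by (simp add: power2_eq_square algebra_simps)
  have b12: "- sqrt 2 * r / s1 - - sqrt 2 * (r+1) / s2 = sqrt 2 * (\<nu>+1) / (s1 * s2)"
    using sn by (simp add: field_simps) (simp add: s1_def s2_def algebra_simps)
  have b21: "- sqrt 2 * r / (2 * s0) - - sqrt 2 * (r+1) / (2 * s1) = sqrt 2 * \<nu> / (2 * s0 * s1)"
    using sn by (simp add: field_simps) (simp add: s0_def s1_def algebra_simps)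
  have BX: "(Xf \<nu> r - Xf \<nu> (r+1)) ** Xf \<nu> r = mat2 (- (\<nu>+1) * r / (s0 * s1 * s2)) 0 0 (- \<nu> * r / (s0 * s1 * s1))"
  proof -
    have D: "Xf \<nu> r - Xf \<nu> (r+1) = mat2 0 (sqrt 2 * (\<nu>+1) / (s1 * s2)) (sqrt 2 * \<nu> / (2 * s0 * s1)) 0"
      unfolding X1 X2 mat_eq_iff2 using b12 b21 by simp
    show ?thesis unfolding D unfolding X1 mat_eq_iff2 mmul_nth2 mat2_nth sqp using sn
      by (simp add: field_simps)
  qed
  have p11: "- r*(r-1)*(r+\<nu>-1) * s2 + ((r+1) * r * (r+\<nu>)) * s0 + 4*((\<nu>+1)*r) - s0 * s1 * s2
     = (- \<nu>*(\<nu>+1)) * s2"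
    unfolding s0_def s1_def s2_def by (simp add: algebra_simps)
  have p22: "- r*(r-1)*(r+\<nu>-2) * (s1 * s1) + ((r+1) * r * (r+\<nu>-1)) * (s0 * s0) + 4*(\<nu>*r) * s0 - (s0 * s0) * (s1 * s1)
   = - ((\<nu>*\<nu>+\<nu>+2) * r * r + (2*\<nu>*\<nu>*\<nu> + 3*\<nu>*\<nu> + 5*\<nu> + 2) * r + \<nu>*\<nu>*(\<nu>+1)*(\<nu>+1))"
    unfolding s0_def s1_def by (simp add: algebra_simps)
  have g11: "A / (4 * s0 * s1) + B / (4 * s1 * s2) + C / (s0 * s1 * s2) - 1/4 = T / (4 * s0 * s1)"
    if "A * s2 + B * s0 + 4 * C - s0 * s1 * s2 = T * s2" for A B C T
    using sn that by (simp add: field_simps)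
  have g22: "A / (4 * s0 * s0) + B / (4 * s1 * s1) + C / (s0 * s1 * s1) - 1/4 = T / (4 * s0 * s0 * s1 * s1)"
    if "A * (s1 * s1) + B * (s0 * s0) + 4 * C * s0 - (s0 * s0) * (s1 * s1) = T" for A B C T
    using sn that by (simp add: field_simps)
  have "CC $ 1 $ 1 = (- r*(r-1)*(r+\<nu>-1)) / (4 * s0 * s1) + ((r+1) * r * (r+\<nu>)) / (4 * s1 * s2) + ((\<nu>+1)*r) / (s0 * s1 * s2) - 1/4"
    unfolding CC_def BX Y1 Y2 using sn by (simp add: field_simps)
  also have "\<dots> = (- \<nu>*(\<nu>+1)) / (4 * s0 * s1)" by (rule g11[OF p11])
  finally show "CC $ 1 $ 1 = - \<nu> * (\<nu>+1) / (4 * (r+\<nu>) * (r+\<nu>+1))" unfolding s0_def s1_def by simp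
  have "CC $ 2 $ 2 = (- r*(r-1)*(r+\<nu>-2)) / (4 * s0 * s0) + ((r+1) * r * (r+\<nu>-1)) / (4 * s1 * s1) + (\<nu>*r) / (s0 * s1 * s1) - 1/4"
    unfolding CC_def BX Y1 Y2 using sn by (simp add: field_simps)
  also have "\<dots> = - ((\<nu>*\<nu>+\<nu>+2) * r * r + (2*\<nu>*\<nu>*\<nu> + 3*\<nu>*\<nu> + 5*\<nu> + 2) * r + \<nu>*\<nu>*(\<nu>+1)*(\<nu>+1)) / (4 * s0 * s0 * s1 * s1)"
    by (rule g22[OF p22])
  finally show "CC $ 2 $ 2 = - ((\<nu>*\<nu>+\<nu>+2) * r * r + (2*\<nu>*\<nu>*\<nu> + 3*\<nu>*\<nu> + 5*\<nu> + 2) * r + \<nu>*\<nu>*(\<nu>+1)*(\<nu>+1))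
             / (4 * (r+\<nu>) * (r+\<nu>) * (r+\<nu>+1) * (r+\<nu>+1))" unfolding s0_def s1_def by simp
  show "CC $ 1 $ 2 = 0" "CC $ 2 $ 1 = 0" unfolding CC_def BX Y1 Y2 by simp_all
qed


lemma bndg:
  fixes N D M k r :: real
  assumes "\<bar>N\<bar> \<le> M * r^a" "D \<ge> k * r^(a+b)" "k > 0" "r > 0"
  shows "\<bar>N / D\<bar> \<le> M / (k * r^b)"
proof -
  have kp: "k * r^(a+b) > 0" using assms(3,4) by simp
  have Dp: "D > 0" using kp assms(2) by linarith
  have ra: "r^a > 0" using assms(4) by simp
  have M0: "M \<ge> 0"
  proof (rule ccontr)
    assume "\<not> M \<ge> 0"
    then have "M * r^a < 0" using ra by (simp add: mult_neg_pos)
    moreover have "\<bar>N\<bar> \<ge> 0" by simp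
    ultimately show False using assms(1) by linarith
  qed
  have "\<bar>N / D\<bar> = \<bar>N\<bar> / D" using Dp by simp
  also have "\<dots> \<le> (M * r^a) / (k * r^(a+b))"
    by (rule frac_le) (use assms M0 Dp in auto)
  also have "\<dots> = M / (k * r^b)" using assms(3,4) by (simp add: power_add field_simps)
  finally show ?thesis .
qed

lemma B_bound:
  assumes nu: "\<nu> > 0" and r: "r \<ge> 1"
  shows "norm (Xf \<nu> r - Xf \<nu> (r+1) - (1 / r\<^sup>2) *\<^sub>R mat2 0 (sqrt 2 * (1 + \<nu>)) (\<nu> / sqrt 2) 0)
    \<le> (sqrt 2 * (\<nu>+1) * ((2*\<nu>+3) + (\<nu>+1)*(\<nu>+2)) + sqrt 2 * \<nu> * ((2*\<nu>+1) + \<nu>*(\<nu>+1)) / 2) / r^3"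
proof -
  have r0: "r > 0" using r by simp
  have b1: "\<bar>- sqrt 2 * (\<nu>+1) * ((2*\<nu>+3) * r + (\<nu>+1)*(\<nu>+2)) / (r\<^sup>2 * (r+\<nu>+1) * (r+\<nu>+2))\<bar>
      \<le> (sqrt 2 * (\<nu>+1) * ((2*\<nu>+3) + (\<nu>+1)*(\<nu>+2))) / (1 * r^3)"
  proof (rule bndg[where a=1])
    have "\<bar>- sqrt 2 * (\<nu>+1) * ((2*\<nu>+3) * r + (\<nu>+1)*(\<nu>+2))\<bar> = sqrt 2 * (\<nu>+1) * ((2*\<nu>+3) * r + (\<nu>+1)*(\<nu>+2))"
      using nu r0 by (simp add: abs_mult)
    also have "\<dots> \<le> sqrt 2 * (\<nu>+1) * (((2*\<nu>+3) + (\<nu>+1)*(\<nu>+2)) * r)"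
    proof (rule mult_left_mono)
      have "(\<nu>+1)*(\<nu>+2) * 1 \<le> (\<nu>+1)*(\<nu>+2) * r" using nu r by (intro mult_left_mono) auto
      then show "(2*\<nu>+3) * r + (\<nu>+1)*(\<nu>+2) \<le> ((2*\<nu>+3) + (\<nu>+1)*(\<nu>+2)) * r"
        by (simp add: algebra_simps)
    qed (use nu in simp)
    finally show "\<bar>- sqrt 2 * (\<nu>+1) * ((2*\<nu>+3) * r + (\<nu>+1)*(\<nu>+2))\<bar> \<le> sqrt 2 * (\<nu>+1) * ((2*\<nu>+3) + (\<nu>+1)*(\<nu>+2)) * r^1"
      by (simp add: mult.assoc)
    have "r^2 * r * r \<le> r\<^sup>2 * (r+\<nu>+1) * (r+\<nu>+2)"
      using nu r0 by (intro mult_mono) auto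
    moreover have "r^(1+3) = r * r * r * r" by (simp add: power4_eq_xxxx)
    ultimately show "r\<^sup>2 * (r+\<nu>+1) * (r+\<nu>+2) \<ge> 1 * r^(1+3)" by (simp add: power2_eq_square)
  qed (use r0 in auto)
  have b2: "\<bar>- sqrt 2 * \<nu> * ((2*\<nu>+1) * r + \<nu>*(\<nu>+1)) / (2 * r\<^sup>2 * (r+\<nu>) * (r+\<nu>+1))\<bar>
      \<le> (sqrt 2 * \<nu> * ((2*\<nu>+1) + \<nu>*(\<nu>+1))) / (2 * r^3)"
  proof (rule bndg[where a=1])
    have "\<bar>- sqrt 2 * \<nu> * ((2*\<nu>+1) * r + \<nu>*(\<nu>+1))\<bar> = sqrt 2 * \<nu> * ((2*\<nu>+1) * r + \<nu>*(\<nu>+1))"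
      using nu r0 by (simp add: abs_mult)
    also have "\<dots> \<le> sqrt 2 * \<nu> * (((2*\<nu>+1) + \<nu>*(\<nu>+1)) * r)"
    proof (rule mult_left_mono)
      have "\<nu>*(\<nu>+1) * 1 \<le> \<nu>*(\<nu>+1) * r" using nu r by (intro mult_left_mono) auto
      then show "(2*\<nu>+1) * r + \<nu>*(\<nu>+1) \<le> ((2*\<nu>+1) + \<nu>*(\<nu>+1)) * r"
        by (simp add: algebra_simps)
    qed (use nu in simp)
    finally show "\<bar>- sqrt 2 * \<nu> * ((2*\<nu>+1) * r + \<nu>*(\<nu>+1))\<bar> \<le> sqrt 2 * \<nu> * ((2*\<nu>+1) + \<nu>*(\<nu>+1)) * r^1"
      by (simp add: mult.assoc)
    have "(2 * r^2) * r * r \<le> (2 * r\<^sup>2) * (r+\<nu>) * (r+\<nu>+1)"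
      using nu r0 by (intro mult_mono) auto
    moreover have "r^(1+3) = r * r * r * r" by (simp add: power4_eq_xxxx)
    ultimately show "2 * r\<^sup>2 * (r+\<nu>) * (r+\<nu>+1) \<ge> 2 * r^(1+3)" by (simp add: power2_eq_square mult.assoc)
  qed (use r0 in auto)
  show ?thesis
    apply (rule order_trans[OF norm_le4])
    unfolding B_closed[OF nu r]
    using b1 b2 by (simp add: add_divide_distrib)
qed

lemma C_bound:
  assumes nu: "\<nu> > 0" and r: "r \<ge> 1"
  shows "norm (Yf \<nu> r - Yf \<nu> (r+1) - (Xf \<nu> r - Xf \<nu> (r+1)) ** Xf \<nu> r - (1/4) *\<^sub>R mat 1)
    \<le> (\<nu> * (\<nu>+1) + ((\<nu>*\<nu>+\<nu>+2) + (2*\<nu>*\<nu>*\<nu> + 3*\<nu>*\<nu> + 5*\<nu> + 2) + \<nu>*\<nu>*(\<nu>+1)*(\<nu>+1))) / (4 * r\<^sup>2)"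
proof -
  have r0: "r > 0" using r by simp
  have c1: "\<bar>- \<nu> * (\<nu>+1) / (4 * (r+\<nu>) * (r+\<nu>+1))\<bar> \<le> (\<nu> * (\<nu>+1)) / (4 * r^2)"
  proof (rule bndg[where a=0])
    show "\<bar>- \<nu> * (\<nu>+1)\<bar> \<le> \<nu> * (\<nu>+1) * r^0" using nu by simp
    have "4 * r * r \<le> 4 * (r+\<nu>) * (r+\<nu>+1)" using nu r0 by (intro mult_mono) auto
    then show "4 * (r+\<nu>) * (r+\<nu>+1) \<ge> 4 * r^(0+2)" by (simp add: power2_eq_square)
  qed (use r0 in auto)
  have c2: "\<bar>- ((\<nu>*\<nu>+\<nu>+2) * r * r + (2*\<nu>*\<nu>*\<nu> + 3*\<nu>*\<nu> + 5*\<nu> + 2) * r + \<nu>*\<nu>*(\<nu>+1)*(\<nu>+1))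
             / (4 * (r+\<nu>) * (r+\<nu>) * (r+\<nu>+1) * (r+\<nu>+1))\<bar>
     \<le> ((\<nu>*\<nu>+\<nu>+2) + (2*\<nu>*\<nu>*\<nu> + 3*\<nu>*\<nu> + 5*\<nu> + 2) + \<nu>*\<nu>*(\<nu>+1)*(\<nu>+1)) / (4 * r^2)"
  proof (rule bndg[where a=2])
    have p: "0 \<le> (\<nu>*\<nu>+\<nu>+2) * r * r + (2*\<nu>*\<nu>*\<nu> + 3*\<nu>*\<nu> + 5*\<nu> + 2) * r + \<nu>*\<nu>*(\<nu>+1)*(\<nu>+1)"
      using nu r0 by (intro add_nonneg_nonneg mult_nonneg_nonneg) auto
    have "(2*\<nu>*\<nu>*\<nu> + 3*\<nu>*\<nu> + 5*\<nu> + 2) * r \<le> (2*\<nu>*\<nu>*\<nu> + 3*\<nu>*\<nu> + 5*\<nu> + 2) * (r * r)"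
      using nu r by (intro mult_left_mono) auto
    moreover have "\<nu>*\<nu>*(\<nu>+1)*(\<nu>+1) \<le> \<nu>*\<nu>*(\<nu>+1)*(\<nu>+1) * (r * r)"
    proof -
      have "1 \<le> r * r" using r mult_mono[of 1 r 1 r] by simp
      moreover have "0 \<le> \<nu>*\<nu>*(\<nu>+1)*(\<nu>+1)" using nu by simp
      ultimately show ?thesis using mult_left_mono[of 1 "r*r" "\<nu>*\<nu>*(\<nu>+1)*(\<nu>+1)"] by simp
    qed
    ultimately show "\<bar>- ((\<nu>*\<nu>+\<nu>+2) * r * r + (2*\<nu>*\<nu>*\<nu> + 3*\<nu>*\<nu> + 5*\<nu> + 2) * r + \<nu>*\<nu>*(\<nu>+1)*(\<nu>+1))\<bar>
      \<le> ((\<nu>*\<nu>+\<nu>+2) + (2*\<nu>*\<nu>*\<nu> + 3*\<nu>*\<nu> + 5*\<nu> + 2) + \<nu>*\<nu>*(\<nu>+1)*(\<nu>+1)) * r^2"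
      using p by (simp add: power2_eq_square algebra_simps)
    have "4 * r * r * r * r \<le> 4 * (r+\<nu>) * (r+\<nu>) * (r+\<nu>+1) * (r+\<nu>+1)" using nu r0 by (intro mult_mono) auto
    moreover have "r^(2+2) = r * r * r * r" by (simp add: power4_eq_xxxx)
    ultimately show "4 * (r+\<nu>) * (r+\<nu>) * (r+\<nu>+1) * (r+\<nu>+1) \<ge> 4 * r^(2+2)" by (simp add: mult.assoc)
  qed (use r0 in auto)
  show ?thesis
    apply (rule order_trans[OF norm_le4])
    unfolding C_closed[OF nu r]
    using c1 c2 by (simp add: add_divide_distrib)
qed


theorem corollary2p9:
  fixes \<nu> :: real
    and P :: "nat \<Rightarrow> real \<Rightarrow> real^2^2"
    and B C :: "nat \<Rightarrow> real^2^2"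
  assumes "\<nu> > 0"
    and "monic_MOPS (W2 \<nu>) P"
    and "\<forall>x. x *\<^sub>R P 0 x = P 1 x + B 0 ** P 0 x"
    and "\<forall>n x. x *\<^sub>R P (Suc n) x = P (Suc (Suc n)) x + B (Suc n) ** P (Suc n) x + C (Suc n) ** P n x"
  shows "(\<exists>K. \<forall>\<^sub>F n in sequentially.
           norm (B n - (1 / (real n)\<^sup>2) *\<^sub>R mat2 0 (sqrt 2 * (1 + \<nu>)) (\<nu> / sqrt 2) 0)
             \<le> K / (real n) ^ 3) \<and>
         (\<exists>K. \<forall>\<^sub>F n in sequentially.
           norm (C n - (1/4) *\<^sub>R mat 1) \<le> K / (real n)\<^sup>2)"
proof (intro conjI exI)
  note nu = assms(1) and M = assms(2) and R = assms(4)
  show "\<forall>\<^sub>F n in sequentially.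
           norm (B n - (1 / (real n)\<^sup>2) *\<^sub>R mat2 0 (sqrt 2 * (1 + \<nu>)) (\<nu> / sqrt 2) 0)
             \<le> (sqrt 2 * (\<nu>+1) * ((2*\<nu>+3) + (\<nu>+1)*(\<nu>+2)) + sqrt 2 * \<nu> * ((2*\<nu>+1) + \<nu>*(\<nu>+1)) / 2) / (real n) ^ 3"
  proof (rule eventually_sequentiallyI[of 2])
    fix n :: nat assume n: "n \<ge> 2"
    then have r: "real n \<ge> 1" by simp
    show "norm (B n - (1 / (real n)\<^sup>2) *\<^sub>R mat2 0 (sqrt 2 * (1 + \<nu>)) (\<nu> / sqrt 2) 0)
             \<le> (sqrt 2 * (\<nu>+1) * ((2*\<nu>+3) + (\<nu>+1)*(\<nu>+2)) + sqrt 2 * \<nu> * ((2*\<nu>+1) + \<nu>*(\<nu>+1)) / 2) / (real n) ^ 3"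
      unfolding BC_formula(1)[OF nu M R n] by (rule B_bound[OF nu r])
  qed
  show "\<forall>\<^sub>F n in sequentially.
           norm (C n - (1/4) *\<^sub>R mat 1) \<le>
      (\<nu> * (\<nu>+1) + ((\<nu>*\<nu>+\<nu>+2) + (2*\<nu>*\<nu>*\<nu> + 3*\<nu>*\<nu> + 5*\<nu> + 2) + \<nu>*\<nu>*(\<nu>+1)*(\<nu>+1))) / 4 / (real n)\<^sup>2"
  proof (rule eventually_sequentiallyI[of 2])
    fix n :: nat assume n: "n \<ge> 2"
    then have r: "real n \<ge> 1" by simp
    show "norm (C n - (1/4) *\<^sub>R mat 1) \<le>
      (\<nu> * (\<nu>+1) + ((\<nu>*\<nu>+\<nu>+2) + (2*\<nu>*\<nu>*\<nu> + 3*\<nu>*\<nu> + 5*\<nu> + 2) + \<nu>*\<nu>*(\<nu>+1)*(\<nu>+1))) / 4 / (real n)\<^sup>2"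
      unfolding BC_formula(2)[OF nu M R n] using C_bound[OF nu r] by (simp add: divide_divide_eq_left)
  qed
qed


end
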